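(* Let $X$ be a real Hilbert space, $A,B\colon X\rightrightarrows X$ maximally monotone, $T:=\operatorname{Id}-J_A+J_BR_A$, $v:=P_{\overline{\operatorname{ran}}(\operatorname{Id}-T)}(0)$, $D:=\operatorname{dom}A-\operatorname{dom}B$, $R:=\operatorname{ran}A+\operatorname{ran}B$, $v_D:=P_{\overline D}(0)$, $v_R:=P_{\overline R}(0)$, and assume $\overline{\operatorname{ran}}(\operatorname{Id}-T)=\overline{D\cap R}=\overline D\cap\overline R$. Set $Z:=\{x\in X: 0\in -v+Ax+B(x-v)\}$ and $\widetilde Z:=\{x\in X: 0\in -v_R+Ax+B(x-v_D)\}$. Then (i) $\widetilde Z\subseteq Z$; (ii) if $v_R=0$, then $\widetilde Z=Z$.
   Context: $J_C:=(\operatorname{Id}+C)^{-1}$ is the resolvent and $R_C:=2J_C-\operatorname{Id}$ the reflected resolvent of a maximally monotone operator $C$. $P_S$ denotes the projection onto a nonempty closed convex set $S$; the closures $\overline D,\overline R$ are convex. $\overline{\operatorname{ran}}$ denotes closure of the range. *)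

theory Defs
  imports "HOL-Analysis.Analysis"
begin

definition monotone_op :: "('a::real_inner \<Rightarrow> 'a set) \<Rightarrow> bool" where
  "monotone_op A \<longleftrightarrow>
     (\<forall>x y u w. u \<in> A x \<longrightarrow> w \<in> A y \<longrightarrow> 0 \<le> inner (x - y) (u - w))"

definition maximal_monotone :: "('a::real_inner \<Rightarrow> 'a set) \<Rightarrow> bool" where
  "maximal_monotone A \<longleftrightarrow> monotone_op A \<and>
     (\<forall>B. monotone_op B \<and> (\<forall>x. A x \<subseteq> B x) \<longrightarrow> B = A)"

definition op_dom :: "('a \<Rightarrow> 'b set) \<Rightarrow> 'a set" where
  "op_dom A = {x. A x \<noteq> {}}"

definition op_ran :: "('a \<Rightarrow> 'b set) \<Rightarrow> 'b set" where
  "op_ran A = (\<Union>x. A x)"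

text \<open>Resolvent J_A = (Id + A)^{-1}: J_A x is the (unique, for maximally monotone A)
  y with x \<in> y + A y.\<close>
definition resolvent :: "('a::real_vector \<Rightarrow> 'a set) \<Rightarrow> 'a \<Rightarrow> 'a" where
  "resolvent A x = (THE y. x - y \<in> A y)"

definition refl_resolvent :: "('a::real_vector \<Rightarrow> 'a set) \<Rightarrow> 'a \<Rightarrow> 'a" where
  "refl_resolvent A x = 2 *\<^sub>R resolvent A x - x"

definition DR_op :: "('a::real_vector \<Rightarrow> 'a set) \<Rightarrow> ('a \<Rightarrow> 'a set) \<Rightarrow> 'a \<Rightarrow> 'a" where
  "DR_op A B x = x - resolvent A x + resolvent B (refl_resolvent A x)"

text \<open>Metric projection P_S (the library's closest_point needs heine_borel, i.e.
  finite dimension; this is the same definition on a general inner product space).\<close>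
definition proj :: "'a::real_inner set \<Rightarrow> 'a \<Rightarrow> 'a" where
  "proj S x = (SOME y. y \<in> S \<and> (\<forall>z\<in>S. dist x y \<le> dist x z))"

end

theory Submission
  imports Defs
begin


lemma maxmono_iff:
  "maximal_monotone A \<longleftrightarrow> monotone_op A \<and>
     (\<forall>x u. (\<forall>y w. w \<in> A y \<longrightarrow> 0 \<le> inner (x - y) (u - w)) \<longrightarrow> u \<in> A x)"
proof
  assume m: "maximal_monotone A"
  hence mo: "monotone_op A" by (simp add: maximal_monotone_def)
  show "monotone_op A \<and> (\<forall>x u. (\<forall>y w. w \<in> A y \<longrightarrow> 0 \<le> inner (x - y) (u - w)) \<longrightarrow> u \<in> A x)"
  proof (intro conjI mo allI impI)
    fix x u assume rel: "\<forall>y w. w \<in> A y \<longrightarrow> 0 \<le> inner (x - y) (u - w)"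
    define B where "B = (\<lambda>z. if z = x then insert u (A z) else A z)"
    have "monotone_op B"
      unfolding monotone_op_def
    proof (intro allI impI)
      fix p q a b assume a: "a \<in> B p" and b: "b \<in> B q"
      show "0 \<le> inner (p - q) (a - b)"
      proof (cases "p = x \<and> a = u")
        case True
        show ?thesis
        proof (cases "q = x \<and> b = u")
          case True with \<open>p = x \<and> a = u\<close> show ?thesis by simp
        next
          case False
          hence "b \<in> A q" using b by (auto simp: B_def split: if_splits)
          thus ?thesis using rel True by auto
        qed
      next
        case False
        hence aA: "a \<in> A p" using a by (auto simp: B_def split: if_splits)
        show ?thesis
        proof (cases "q = x \<and> b = u")
          case True
          have "0 \<le> inner (x - p) (u - a)" using rel aA by auto
          moreover have "inner (p - q) (a - b) = inner (x - p) (u - a)" using True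
            by (metis inner_minus_left inner_minus_right minus_diff_eq minus_minus)
          ultimately show ?thesis by simp
        next
          case False
          hence "b \<in> A q" using b by (auto simp: B_def split: if_splits)
          thus ?thesis using mo aA unfolding monotone_op_def by auto
        qed
      qed
    qed
    moreover have "\<forall>z. A z \<subseteq> B z" by (auto simp: B_def)
    ultimately have "B = A" using m unfolding maximal_monotone_def by blast
    have "u \<in> B x" by (simp add: B_def)
    thus "u \<in> A x" using \<open>B = A\<close> by simp
  qed
next
  assume h: "monotone_op A \<and> (\<forall>x u. (\<forall>y w. w \<in> A y \<longrightarrow> 0 \<le> inner (x - y) (u - w)) \<longrightarrow> u \<in> A x)"
  show "maximal_monotone A" unfolding maximal_monotone_def
  proof (intro conjI allI impI)
    show "monotone_op A" using h by simp
    fix B assume B: "monotone_op B \<and> (\<forall>x. A x \<subseteq> B x)"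
    show "B = A"
    proof (rule ext, rule equalityI)
      fix z show "B z \<subseteq> A z"
      proof
        fix b assume "b \<in> B z"
        hence "\<forall>y w. w \<in> A y \<longrightarrow> 0 \<le> inner (z - y) (b - w)"
          using B unfolding monotone_op_def by blast
        thus "b \<in> A z" using h by blast
      qed
    qed (use B in auto)
  qed
qed

lemma maxmono_rel:
  assumes "maximal_monotone A" "\<And>y w. w \<in> A y \<Longrightarrow> 0 \<le> inner (x - y) (u - w)"
  shows "u \<in> A x"
  using assms maxmono_iff by blast

lemma maxmono_mono:
  assumes "maximal_monotone A" "u \<in> A x" "w \<in> A y"
  shows "0 \<le> inner (x - y) (u - w)"
  using assms unfolding maximal_monotone_def monotone_op_def by blast

lemma maxmono_nonempty:
  assumes "maximal_monotone (A :: 'a::real_inner \<Rightarrow> 'a set)"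
  shows "\<exists>y w. w \<in> A y"
proof (rule ccontr)
  assume na: "\<not> (\<exists>y w. w \<in> A y)"
  hence "(0::'a) \<in> A 0" using maxmono_rel[OF assms, of 0 0] by blast
  thus False using na by blast
qed

lemma maxmono_scale_shift:
  fixes A :: "'a::real_inner \<Rightarrow> 'a set"
  assumes m: "maximal_monotone A" and l: "l > 0"
  shows "maximal_monotone (\<lambda>y. (\<lambda>a. l *\<^sub>R a - z) ` A y)"
  unfolding maxmono_iff
proof (intro conjI allI impI)
  show "monotone_op (\<lambda>y. (\<lambda>a. l *\<^sub>R a - z) ` A y)"
    unfolding monotone_op_def
  proof (intro allI impI)
    fix x y u w assume "u \<in> (\<lambda>a. l *\<^sub>R a - z) ` A x" "w \<in> (\<lambda>a. l *\<^sub>R a - z) ` A y"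
    then obtain a b where ab: "a \<in> A x" "b \<in> A y" "u = l *\<^sub>R a - z" "w = l *\<^sub>R b - z" by auto
    have "inner (x - y) (u - w) = l * inner (x - y) (a - b)"
      unfolding ab(3,4) by (simp add: inner_diff_right algebra_simps)
    thus "0 \<le> inner (x - y) (u - w)" using maxmono_mono[OF m ab(1,2)] l by simp
  qed
next
  fix x u assume rel: "\<forall>y w. w \<in> (\<lambda>a. l *\<^sub>R a - z) ` A y \<longrightarrow> 0 \<le> inner (x - y) (u - w)"
  have "(1/l) *\<^sub>R (u + z) \<in> A x"
  proof (rule maxmono_rel[OF m])
    fix y w assume w: "w \<in> A y"
    have "0 \<le> inner (x - y) (u - (l *\<^sub>R w - z))" using rel w by blast
    moreover have "inner (x - y) (u - (l *\<^sub>R w - z)) = l * inner (x - y) ((1/l) *\<^sub>R (u + z) - w)"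
      using l by (simp add: inner_diff_right inner_add_right inner_scaleR_right algebra_simps)
    ultimately show "0 \<le> inner (x - y) ((1/l) *\<^sub>R (u + z) - w)" using l
      by (simp add: zero_le_mult_iff)
  qed
  moreover have "u = l *\<^sub>R ((1/l) *\<^sub>R (u + z)) - z" using l by simp
  ultimately show "u \<in> (\<lambda>a. l *\<^sub>R a - z) ` A x" by blast
qed

lemma maxmono_inverse:
  fixes A :: "'a::real_inner \<Rightarrow> 'a set"
  assumes m: "maximal_monotone A"
  shows "maximal_monotone (\<lambda>u. {x. u \<in> A x})"
  unfolding maxmono_iff
proof (intro conjI allI impI)
  show "monotone_op (\<lambda>u. {x. u \<in> A x})" unfolding monotone_op_def
    using maxmono_mono[OF m] by (metis inner_commute mem_Collect_eq)
next
  fix x u assume rel: "\<forall>y w. w \<in> {x. y \<in> A x} \<longrightarrow> 0 \<le> inner (x - y) (u - w)"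
  have "x \<in> A u"
    by (rule maxmono_rel[OF m]) (use rel in \<open>auto simp: inner_commute\<close>)
  thus "u \<in> {xa. x \<in> A xa}" by simp
qed


lemma norm_mid_sq:
  fixes x y :: "'a::real_inner"
  shows "(norm ((1/2) *\<^sub>R (x + y)))^2 = (norm x)^2/2 + (norm y)^2/2 - (norm (x - y))^2/4"
  unfolding power2_norm_eq_inner
  by (simp add: inner_add_left inner_add_right inner_diff_left inner_diff_right inner_commute algebra_simps) (simp add: field_simps)

lemma norm_comb_sq:
  fixes x d :: "'a::real_inner"
  shows "(norm (x + t *\<^sub>R d))^2 = (norm x)^2 + 2 * t * inner x d + t^2 * (norm d)^2"
  unfolding power2_norm_eq_inner
  by (simp add: inner_add_left inner_add_right inner_commute algebra_simps power2_eq_square)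

lemma small_t_nonneg:
  fixes c N :: real
  assumes "N \<ge> 0" "\<And>t. 0 < t \<Longrightarrow> t \<le> 1 \<Longrightarrow> 0 \<le> c + t * N"
  shows "0 \<le> c"
proof (rule ccontr)
  assume "\<not> 0 \<le> c"
  define t where "t = min 1 (- c / (2 * (N + 1)))"
  have "0 < - c / (2 * (N + 1))" using \<open>\<not> 0 \<le> c\<close> assms(1) by (intro divide_pos_pos) auto
  hence t0: "0 < t" "t \<le> 1" by (auto simp: t_def)
  have "t * N \<le> (- c / (2 * (N + 1))) * N"
    using assms(1) by (intro mult_right_mono) (auto simp: t_def)
  also have "\<dots> < - c"
  proof -
    have "N * c \<le> 0" using \<open>\<not> 0 \<le> c\<close> assms(1) by (simp add: mult_nonneg_nonpos)
    thus ?thesis using \<open>\<not> 0 \<le> c\<close> assms(1) by (simp add: field_simps)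
  qed
  finally show False using assms(2)[OF t0] by linarith
qed


lemma arith1: "((X::real) + 2*t*a + t^2*P)/2 + (U + 2*t*b + t^2*Q)/2 = (X/2 + U/2) + t*(a+b) + t^2*((P+Q)/2)"
  by (simp add: field_simps)

lemma arith2: assumes "(L::real) = I - F + a" shows "t*(L + t*N) = (1-t)*F + t*I + (Q + t*a + t^2*N) - (F + Q)"
  unfolding assms by (simp add: algebra_simps power2_eq_square)

lemma minty0:
  fixes A :: "'a::{real_inner,complete_space} \<Rightarrow> 'a set"
  assumes m: "maximal_monotone A"
  shows "\<exists>x. - x \<in> A x"
proof -
  define G :: "('a \<times> 'a) set" where "G = {(y,w). w \<in> A y}"
  define f :: "'a \<Rightarrow> 'a \<Rightarrow> 'a \<times> 'a \<Rightarrow> real" where "f = (\<lambda>x u (y,w). inner x w + inner y u - inner y w)"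
  define Dm :: "('a \<times> 'a) set" where "Dm = {(x,u). bdd_above (f x u ` G)}"
  define Fr :: "'a \<Rightarrow> 'a \<Rightarrow> real" where "Fr = (\<lambda>x u. Sup (f x u ` G))"
  define q :: "'a \<Rightarrow> 'a \<Rightarrow> real" where "q = (\<lambda>x u. (norm x)^2/2 + (norm u)^2/2)"
  define g where "g = (\<lambda>x u. Fr x u + q x u)"
  have fp: "f x u (y,w) = inner x w + inner y u - inner y w" for x u y w by (simp add: f_def)
  have Gne: "G \<noteq> {}" using maxmono_nonempty[OF m] by (auto simp: G_def)
  have fG: "f x u (y,w) = inner x u - inner (x - y) (u - w)" for x u y w
    by (simp add: f_def inner_diff_left inner_diff_right algebra_simps)
  have graph: "(y,w) \<in> Dm \<and> Fr y w = inner y w" if "(y,w) \<in> G" for y w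
  proof -
    have le: "f y w p \<le> inner y w" if "p \<in> G" for p
    proof -
      obtain y' w' where p: "p = (y',w')" "w' \<in> A y'" using \<open>p \<in> G\<close> by (auto simp: G_def)
      have "w \<in> A y" using \<open>(y,w) \<in> G\<close> by (simp add: G_def)
      thus ?thesis using maxmono_mono[OF m \<open>w \<in> A y\<close> p(2)] p(1) fG by simp
    qed
    hence bdd: "bdd_above (f y w ` G)" by (rule bdd_aboveI2)
    have "Sup (f y w ` G) = inner y w"
    proof (rule antisym)
      show "Sup (f y w ` G) \<le> inner y w" using le Gne by (auto intro: cSUP_least)
      have "f y w (y,w) = inner y w" using fG by simp
      thus "inner y w \<le> Sup (f y w ` G)" using cSUP_upper[OF that bdd] by simp
    qed
    thus ?thesis using bdd by (simp add: Dm_def Fr_def)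
  qed
  have low: "inner x u \<le> Fr x u" if "(x,u) \<in> Dm" for x u
  proof (rule ccontr)
    assume "\<not> inner x u \<le> Fr x u"
    have bdd: "bdd_above (f x u ` G)" using that by (simp add: Dm_def)
    have "u \<in> A x"
    proof (rule maxmono_rel[OF m])
      fix y w assume "w \<in> A y"
      hence "f x u (y,w) \<le> Fr x u" unfolding Fr_def using bdd by (intro cSUP_upper) (auto simp: G_def)
      thus "0 \<le> inner (x - y) (u - w)" using fG \<open>\<not> inner x u \<le> Fr x u\<close> by simp
    qed
    hence "Fr x u = inner x u" using graph[of x u] by (simp add: G_def)
    thus False using \<open>\<not> inner x u \<le> Fr x u\<close> by simp
  qed
  have conv: "((1-t) *\<^sub>R x + t *\<^sub>R x', (1-t) *\<^sub>R u + t *\<^sub>R u') \<in> Dm \<and>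
      Fr ((1-t) *\<^sub>R x + t *\<^sub>R x') ((1-t) *\<^sub>R u + t *\<^sub>R u') \<le> (1-t) * Fr x u + t * Fr x' u'"
    if "(x,u) \<in> Dm" "(x',u') \<in> Dm" "0 \<le> t" "t \<le> 1" for x u x' u' t
  proof -
    have b1: "bdd_above (f x u ` G)" and b2: "bdd_above (f x' u' ` G)" using that by (auto simp: Dm_def)
    have le: "f ((1-t) *\<^sub>R x + t *\<^sub>R x') ((1-t) *\<^sub>R u + t *\<^sub>R u') p \<le> (1-t) * Fr x u + t * Fr x' u'"
      if "p \<in> G" for p
    proof -
      obtain y w where p: "p = (y,w)" by force
      have "f ((1-t) *\<^sub>R x + t *\<^sub>R x') ((1-t) *\<^sub>R u + t *\<^sub>R u') p = (1-t) * f x u p + t * f x' u' p"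
        by (simp add: p f_def inner_add_left inner_add_right algebra_simps)
      also have "\<dots> \<le> (1-t) * Fr x u + t * Fr x' u'"
        unfolding Fr_def
        by (intro add_mono mult_left_mono cSUP_upper that b1 b2) (use \<open>0 \<le> t\<close> \<open>t \<le> 1\<close> in auto)
      finally show ?thesis .
    qed
    show ?thesis
    proof
      show "((1-t) *\<^sub>R x + t *\<^sub>R x', (1-t) *\<^sub>R u + t *\<^sub>R u') \<in> Dm"
        unfolding Dm_def using bdd_aboveI2[OF le] by simp
      show "Fr ((1-t) *\<^sub>R x + t *\<^sub>R x') ((1-t) *\<^sub>R u + t *\<^sub>R u') \<le> (1-t) * Fr x u + t * Fr x' u'"
        unfolding Fr_def using le Gne by (intro cSUP_least) (auto simp: Fr_def)
    qed
  qed
  have gpos: "0 \<le> g x u" if "(x,u) \<in> Dm" for x u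
  proof -
    have "inner x u + q x u = (norm (x + u))^2 / 2"
      unfolding q_def power2_norm_eq_inner by (simp add: inner_add_left inner_add_right inner_commute)
    thus ?thesis using low[OF that] zero_le_power2[of "norm (x + u)"] unfolding g_def by linarith
  qed
  define m where "m = Inf ((\<lambda>(x,u). g x u) ` Dm)"
  have Dne: "Dm \<noteq> {}" using Gne graph by auto
  have bddb: "bdd_below ((\<lambda>(x,u). g x u) ` Dm)" by (rule bdd_belowI2[where m=0]) (use gpos in auto)
  have mle: "m \<le> g x u" if "(x,u) \<in> Dm" for x u
    unfolding m_def using cINF_lower[OF bddb that] by simp
  have "\<forall>n::nat. \<exists>p\<in>Dm. (\<lambda>(x,u). g x u) p < m + 1/(Suc n)"
  proof
    fix n :: nat
    have "m < m + 1/(Suc n)" by simp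
    thus "\<exists>p\<in>Dm. (\<lambda>(x,u). g x u) p < m + 1/(Suc n)"
      unfolding m_def using cInf_lessD[of "(\<lambda>(x,u). g x u) ` Dm"] Dne by (auto simp: m_def)
  qed
  then obtain P where P: "\<And>n. P n \<in> Dm" "\<And>n. (\<lambda>(x,u). g x u) (P n) < m + 1/(Suc n)" by metis
  define xs where "xs = (\<lambda>n. fst (P n))"
  define us where "us = (\<lambda>n. snd (P n))"
  have PD: "(xs n, us n) \<in> Dm" for n using P(1) by (simp add: xs_def us_def)
  have Pg: "g (xs n) (us n) < m + 1/(Suc n)" for n using P(2)[of n]
    by (simp add: xs_def us_def case_prod_beta)
  have mid: "(norm (x - x'))^2 + (norm (u - u'))^2 \<le> 4 * (g x u + g x' u' - 2 * m)"
    if "(x,u) \<in> Dm" "(x',u') \<in> Dm" for x u x' u'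
  proof -
    have c: "((1-1/2) *\<^sub>R x + (1/2) *\<^sub>R x', (1-1/2) *\<^sub>R u + (1/2) *\<^sub>R u') \<in> Dm \<and>
      Fr ((1-1/2) *\<^sub>R x + (1/2) *\<^sub>R x') ((1-1/2) *\<^sub>R u + (1/2) *\<^sub>R u') \<le> (1-1/2) * Fr x u + (1/2) * Fr x' u'"
      by (rule conv[OF that]) auto
    have e1: "(1-1/2) *\<^sub>R x + (1/2) *\<^sub>R x' = (1/2) *\<^sub>R (x + x')" for x x' :: 'a
      by (simp add: scaleR_add_right)
    have "m \<le> g ((1/2) *\<^sub>R (x + x')) ((1/2) *\<^sub>R (u + u'))"
      using mle c unfolding e1 by blast
    moreover have "Fr ((1/2) *\<^sub>R (x + x')) ((1/2) *\<^sub>R (u + u')) \<le> (Fr x u + Fr x' u') / 2"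
      using c unfolding e1 by simp
    ultimately show ?thesis
      unfolding g_def q_def norm_mid_sq by (simp add: field_simps)
  qed
  have cauchy_bound: "(norm (xs n - xs k))^2 + (norm (us n - us k))^2 \<le> 8 / Suc N"
    if "N \<le> n" "N \<le> k" for n k N
  proof -
    have "(norm (xs n - xs k))^2 + (norm (us n - us k))^2 \<le> 4 * (g (xs n) (us n) + g (xs k) (us k) - 2 * m)"
      by (rule mid[OF PD PD])
    also have "\<dots> \<le> 4 * (1/Suc n + 1/Suc k)" using Pg[of n] Pg[of k] by simp
    also have "\<dots> \<le> 4 * (1/Suc N + 1/Suc N)"
      using that by (intro mult_left_mono add_mono) (auto simp: frac_le)
    finally show ?thesis by simp
  qed
  have cauchy_eps: "\<exists>N. \<forall>n\<ge>N. \<forall>k\<ge>N. (norm (xs n - xs k))^2 + (norm (us n - us k))^2 < e" if "e > 0" for e :: real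
  proof -
    obtain N :: nat where N: "8 / e < N" using reals_Archimedean2 by blast
    have "8 / Suc N < e"
    proof -
      have "8 < e * N" using N that by (simp add: field_simps)
      hence "8 < e * Suc N" using that by (smt (verit) mult_left_mono of_nat_Suc)
      thus ?thesis using that by (simp add: field_simps)
    qed
    thus ?thesis using cauchy_bound by (meson le_less_trans)
  qed
  have Cx: "Cauchy xs"
  proof (rule metric_CauchyI)
    fix e :: real assume "e > 0"
    then obtain N where N: "\<forall>n\<ge>N. \<forall>k\<ge>N. (norm (xs n - xs k))^2 + (norm (us n - us k))^2 < e^2"
      using cauchy_eps[of "e^2"] by auto
    show "\<exists>M. \<forall>m\<ge>M. \<forall>n\<ge>M. dist (xs m) (xs n) < e"
    proof (intro exI allI impI)
      fix a b assume "N \<le> a" "N \<le> b"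
      hence "(norm (xs a - xs b))^2 + (norm (us a - us b))^2 < e^2" using N by blast
      hence "(norm (xs a - xs b))^2 < e^2"
        using zero_le_power2[of "norm (xs a - xs b)"] zero_le_power2[of "norm (us a - us b)"] by linarith
      thus "dist (xs a) (xs b) < e" using \<open>e > 0\<close> by (simp add: dist_norm power2_less_imp_less)
    qed
  qed
  have Cu: "Cauchy us"
  proof (rule metric_CauchyI)
    fix e :: real assume "e > 0"
    then obtain N where N: "\<forall>n\<ge>N. \<forall>k\<ge>N. (norm (xs n - xs k))^2 + (norm (us n - us k))^2 < e^2"
      using cauchy_eps[of "e^2"] by auto
    show "\<exists>M. \<forall>m\<ge>M. \<forall>n\<ge>M. dist (us m) (us n) < e"
    proof (intro exI allI impI)
      fix a b assume "N \<le> a" "N \<le> b"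
      hence "(norm (xs a - xs b))^2 + (norm (us a - us b))^2 < e^2" using N by blast
      hence "(norm (us a - us b))^2 < e^2"
        using zero_le_power2[of "norm (xs a - xs b)"] zero_le_power2[of "norm (us a - us b)"] by linarith
      thus "dist (us a) (us b) < e" using \<open>e > 0\<close> by (simp add: dist_norm power2_less_imp_less)
    qed
  qed
  obtain xo where xo: "xs \<longlonglongrightarrow> xo" using Cx convergent_eq_Cauchy by blast
  obtain uo where uo: "us \<longlonglongrightarrow> uo" using Cu convergent_eq_Cauchy by blast
  have limb: "f xo uo p \<le> m - q xo uo" if "p \<in> G" for p
  proof -
    obtain y w where p: "p = (y,w)" by force
    have "f (xs n) (us n) p + q (xs n) (us n) - 1/Suc n \<le> m" for n
    proof -
      have "f (xs n) (us n) p \<le> Fr (xs n) (us n)"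
        unfolding Fr_def using PD[of n] that by (intro cSUP_upper) (auto simp: Dm_def)
      thus ?thesis using Pg[of n] by (simp add: g_def)
    qed
    moreover have "(\<lambda>n. f (xs n) (us n) p + q (xs n) (us n) - 1/Suc n) \<longlonglongrightarrow> f xo uo p + q xo uo - 0"
    proof -
      have l1: "(\<lambda>n. f (xs n) (us n) p) \<longlonglongrightarrow> f xo uo p"
        unfolding p fp by (intro tendsto_intros xo uo)
      have l2: "(\<lambda>n. q (xs n) (us n)) \<longlonglongrightarrow> q xo uo"
        unfolding q_def by (intro tendsto_add tendsto_divide tendsto_power tendsto_norm xo uo tendsto_const) simp_all
      have l3: "(\<lambda>n. 1 / real (Suc n)) \<longlonglongrightarrow> 0"
        using LIMSEQ_inverse_real_of_nat by (simp add: inverse_eq_divide)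
      show ?thesis by (intro tendsto_intros l1 l2 l3)
    qed
    ultimately have "f xo uo p + q xo uo - 0 \<le> m" by (intro LIMSEQ_le_const2) auto
    thus ?thesis by simp
  qed
  have oD: "(xo,uo) \<in> Dm" unfolding Dm_def using bdd_aboveI2[OF limb] by simp
  have Fro: "Fr xo uo = m - q xo uo"
  proof (rule antisym)
    show "Fr xo uo \<le> m - q xo uo" unfolding Fr_def using limb Gne by (intro cSUP_least) auto
    show "m - q xo uo \<le> Fr xo uo" using mle[OF oD] by (simp add: g_def)
  qed
  have var: "0 \<le> inner y w - Fr xo uo + inner xo (y - xo) + inner uo (w - uo)" if "w \<in> A y" for y w
  proof -
    define L where "L = inner y w - Fr xo uo + inner xo (y - xo) + inner uo (w - uo)"
    define N where "N = ((norm (y - xo))^2 + (norm (w - uo))^2) / 2"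
    define F where "F = Fr xo uo"
    define I where "I = inner y w"
    define Q where "Q = q xo uo"
    define a where "a = inner xo (y - xo) + inner uo (w - uo)"
    have LIFa: "L = I - F + a" unfolding L_def I_def F_def a_def by linarith
    have mF: "m = F + Q" using Fro by (simp add: F_def Q_def)
    have "0 \<le> L"
    proof (rule small_t_nonneg[of N])
      show "0 \<le> N" by (simp add: N_def)
      fix t :: real assume t: "0 < t" "t \<le> 1"
      have yG: "(y,w) \<in> G" using that by (simp add: G_def)
      have c: "((1-t) *\<^sub>R xo + t *\<^sub>R y, (1-t) *\<^sub>R uo + t *\<^sub>R w) \<in> Dm \<and>
        Fr ((1-t) *\<^sub>R xo + t *\<^sub>R y) ((1-t) *\<^sub>R uo + t *\<^sub>R w) \<le> (1-t) * Fr xo uo + t * Fr y w"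
        by (rule conv[OF oD]) (use graph[OF yG] t in auto)
      have e1: "(1-t) *\<^sub>R a + t *\<^sub>R b = a + t *\<^sub>R (b - a)" for a b :: 'a
        by (simp add: algebra_simps)
      have "m \<le> g ((1-t) *\<^sub>R xo + t *\<^sub>R y) ((1-t) *\<^sub>R uo + t *\<^sub>R w)" using mle c by blast
      also have "\<dots> \<le> (1-t) * Fr xo uo + t * inner y w + q (xo + t *\<^sub>R (y - xo)) (uo + t *\<^sub>R (w - uo))"
        using c graph[OF yG] unfolding g_def e1 by simp
      also have "q (xo + t *\<^sub>R (y - xo)) (uo + t *\<^sub>R (w - uo)) = Q + t * a + t^2 * N"
        unfolding q_def norm_comb_sq Q_def a_def N_def by (rule arith1)
      finally have ineq: "m \<le> (1-t) * F + t * I + (Q + t * a + t^2 * N)" by (simp add: F_def I_def)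
      have "t * (L + t * N) = (1-t) * F + t * I + (Q + t * a + t^2 * N) - (F + Q)"
        by (rule arith2[OF LIFa])
      hence "0 \<le> t * (L + t * N)" using ineq mF by linarith
      thus "0 \<le> L + t * N" using t by (simp add: zero_le_mult_iff)
    qed
    thus ?thesis by (simp add: L_def)
  qed
  have key: "(norm (xo + uo))^2 \<le> inner (y + uo) (w + xo)" if "w \<in> A y" for y w
  proof -
    have "inner (y + uo) (w + xo) - (norm (xo + uo))^2
        = inner y w - inner xo uo + inner xo (y - xo) + inner uo (w - uo)"
      unfolding power2_norm_eq_inner
      unfolding inner_add_left inner_add_right inner_diff_left inner_diff_right
      using inner_commute[of y xo] inner_commute[of uo xo] by linarith
    moreover have "inner xo uo \<le> Fr xo uo" by (rule low[OF oD])
    ultimately show ?thesis using var[OF that] by linarith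
  qed
  have inA: "- xo \<in> A (- uo)"
  proof (rule maxmono_rel[OF m])
    fix y w assume "w \<in> A y"
    have "0 \<le> inner (y + uo) (w + xo)" using key[OF \<open>w \<in> A y\<close>] zero_le_power2[of "norm (xo + uo)"] by linarith
    moreover have "inner (- uo - y) (- xo - w) = inner (y + uo) (w + xo)"
    proof -
      have e: "- uo - y = - (y + uo)" "- xo - w = - (w + xo)" by simp_all
      show ?thesis unfolding e inner_minus_left inner_minus_right minus_minus ..
    qed
    ultimately show "0 \<le> inner (- uo - y) (- xo - w)" by simp
  qed
  have "(norm (xo + uo))^2 \<le> 0" using key[OF inA] by simp
  hence "xo + uo = 0" by simp
  hence "uo = - xo" using add_eq_0_iff by blast
  thus ?thesis using inA by auto
qed


lemma minty:
  fixes A :: "'a::{real_inner,complete_space} \<Rightarrow> 'a set"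
  assumes m: "maximal_monotone A" and l: "l > 0"
  shows "\<exists>p a. a \<in> A p \<and> l *\<^sub>R a = z - p"
proof -
  obtain x where "- x \<in> (\<lambda>a. l *\<^sub>R a - z) ` A x"
    using minty0[OF maxmono_scale_shift[OF m l, of z]] by blast
  then obtain a where "a \<in> A x" "- x = l *\<^sub>R a - z" by blast
  thus ?thesis by (intro exI[of _ x] exI[of _ a]) (auto simp: algebra_simps)
qed

lemma comb1: "(1 - t) * c + t * c = (c::real)" by (simp add: algebra_simps)

lemma comb2: assumes "(P::real) > 0" "K \<ge> 0" shows "eps / (2 * (K + 1) * P) * P * K = eps * K / (2 * (K + 1))"
  using assms(1) by auto

lemma convex_closure_twopoint:
  fixes S :: "'a::real_normed_vector set"
  assumes h: "\<And>y1 y2 t. y1 \<in> S \<Longrightarrow> y2 \<in> S \<Longrightarrow> 0 \<le> t \<Longrightarrow> t \<le> 1 \<Longrightarrow> (1 - t) *\<^sub>R y1 + t *\<^sub>R y2 \<in> closure S"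
  shows "convex (closure S)"
  unfolding convex_alt
proof (intro ballI allI impI)
  fix a b and t :: real assume a: "a \<in> closure S" and b: "b \<in> closure S" and t: "0 \<le> t \<and> t \<le> 1"
  show "(1 - t) *\<^sub>R a + t *\<^sub>R b \<in> closure S"
    unfolding closure_approachable
  proof (intro allI impI)
    fix e :: real assume e: "e > 0"
    obtain a' where a': "a' \<in> S" "dist a' a < e/2" using a e unfolding closure_approachable by (meson half_gt_zero)
    obtain b' where b': "b' \<in> S" "dist b' b < e/2" using b e unfolding closure_approachable by (meson half_gt_zero)
    have c: "(1 - t) *\<^sub>R a' + t *\<^sub>R b' \<in> closure S" using h a'(1) b'(1) t by blast
    obtain s where s: "s \<in> S" "dist s ((1 - t) *\<^sub>R a' + t *\<^sub>R b') < e/2"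
      using c e unfolding closure_approachable by (meson half_gt_zero)
    have "dist ((1 - t) *\<^sub>R a' + t *\<^sub>R b') ((1 - t) *\<^sub>R a + t *\<^sub>R b)
        \<le> (1 - t) * dist a' a + t * dist b' b"
    proof -
      have "(1 - t) *\<^sub>R a' + t *\<^sub>R b' - ((1 - t) *\<^sub>R a + t *\<^sub>R b) = (1 - t) *\<^sub>R (a' - a) + t *\<^sub>R (b' - b)"
        by (simp add: algebra_simps)
      hence "dist ((1 - t) *\<^sub>R a' + t *\<^sub>R b') ((1 - t) *\<^sub>R a + t *\<^sub>R b) = norm ((1 - t) *\<^sub>R (a' - a) + t *\<^sub>R (b' - b))"
        by (simp add: dist_norm)
      also have "\<dots> \<le> norm ((1 - t) *\<^sub>R (a' - a)) + norm (t *\<^sub>R (b' - b))" by (rule norm_triangle_ineq)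
      also have "\<dots> = (1 - t) * dist a' a + t * dist b' b" using t by (simp add: dist_norm)
      finally show ?thesis .
    qed
    also have "\<dots> \<le> (1 - t) * (e/2) + t * (e/2)"
      using a'(2) b'(2) t by (intro add_mono mult_left_mono) auto
    also have "\<dots> = e/2" using comb1[of t "e/2"] .
    finally have "dist ((1 - t) *\<^sub>R a' + t *\<^sub>R b') ((1 - t) *\<^sub>R a + t *\<^sub>R b) \<le> e/2" .
    hence "dist s ((1 - t) *\<^sub>R a + t *\<^sub>R b) < e" using s(2) dist_triangle[of s "(1 - t) *\<^sub>R a + t *\<^sub>R b" "(1 - t) *\<^sub>R a' + t *\<^sub>R b'"]
      by linarith
    thus "\<exists>y\<in>S. dist y ((1 - t) *\<^sub>R a + t *\<^sub>R b) < e" using s(1) by blast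
  qed
qed

lemma arith_small:
  fixes e eps lam K M :: real
  assumes "eps > 0" "K \<ge> 0" "M \<ge> 0" "e \<ge> 0"
    and lam: "lam = eps / (2 * (K + 1) * (1 + M / eps))"
    and h: "e^2 \<le> lam * (e + M) * K"
  shows "e < eps"
proof (rule ccontr)
  assume "\<not> e < eps"
  hence ee: "e \<ge> eps" by simp
  have "M / eps \<ge> 0" using assms by simp
  hence p1: "1 + M / eps > 0" by linarith
  have lam0: "lam > 0" unfolding lam using assms p1 by (intro divide_pos_pos mult_pos_pos) auto
  have "e + M \<le> e * (1 + M / eps)"
  proof -
    have "M * eps \<le> M * e" by (rule mult_left_mono[OF ee \<open>M \<ge> 0\<close>])
    hence "M \<le> e * (M / eps)" using \<open>eps > 0\<close> by (simp add: field_simps)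
    thus ?thesis by (simp add: algebra_simps)
  qed
  hence "e^2 \<le> lam * (e * (1 + M / eps)) * K"
    using h lam0 assms by (smt (verit) mult_left_mono mult_right_mono)
  hence "e * e \<le> e * (lam * (1 + M / eps) * K)" by (simp add: power2_eq_square algebra_simps)
  hence "e \<le> lam * (1 + M / eps) * K" using ee assms by (simp add: mult_le_cancel_left_pos)
  also have "lam * (1 + M / eps) * K = eps * K / (2 * (K + 1))" using comb2[OF p1 \<open>K \<ge> 0\<close>, of eps] unfolding lam .
  also have "\<dots> < eps"
  proof -
    have d: "2*(K+1) > 0" using assms by simp
    have "eps * K < eps * (2 * (K+1))" using assms by (intro mult_strict_left_mono) auto
    thus ?thesis using pos_divide_less_eq[OF d] by (metis mult.commute)
  qed
  finally show False using ee by simp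
qed

lemma convex_closure_dom:
  fixes A :: "'a::{real_inner,complete_space} \<Rightarrow> 'a set"
  assumes m: "maximal_monotone A"
  shows "convex (closure (op_dom A))"
proof (rule convex_closure_twopoint)
  fix y1 y2 and th :: real assume y1: "y1 \<in> op_dom A" and y2: "y2 \<in> op_dom A" and th: "0 \<le> th" "th \<le> 1"
  obtain u1 where u1: "u1 \<in> A y1" using y1 by (auto simp: op_dom_def)
  obtain u2 where u2: "u2 \<in> A y2" using y2 by (auto simp: op_dom_def)
  define x where "x = (1 - th) *\<^sub>R y1 + th *\<^sub>R y2"
  show "(1 - th) *\<^sub>R y1 + th *\<^sub>R y2 \<in> closure (op_dom A)"
    unfolding x_def[symmetric] closure_approachable
  proof (intro allI impI)
    fix eps :: real assume eps: "eps > 0"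
    define K where "K = norm u1 + norm u2"
    define M where "M = norm (x - y1) + norm (x - y2)"
    define lam where "lam = eps / (2 * (K + 1) * (1 + M / eps))"
    have K0: "K \<ge> 0" and M0: "M \<ge> 0" by (simp_all add: K_def M_def)
    have "1 + M / eps > 0" using eps M0 by (simp add: add_pos_nonneg)
    hence lam0: "lam > 0" unfolding lam_def using eps K0 by (intro divide_pos_pos mult_pos_pos) auto
    obtain p a where pa: "a \<in> A p" "lam *\<^sub>R a = x - p" using minty[OF m lam0] by blast
    define e where "e = norm (x - p)"
    have bnd: "inner (p - y) (x - p) \<ge> - lam * ((e + norm (x - y)) * norm u)" if "u \<in> A y" for y u
    proof -
      have "0 \<le> inner (p - y) (a - u)" by (rule maxmono_mono[OF m pa(1) that])
      hence "0 \<le> lam * inner (p - y) (a - u)" using lam0 by simp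
      also have "lam * inner (p - y) (a - u) = inner (p - y) (x - p) - lam * inner (p - y) u"
      proof -
        have ia: "lam * inner (p - y) a = inner (p - y) (x - p)" using pa(2) by (metis inner_scaleR_right)
        thus ?thesis by (simp add: inner_diff_right right_diff_distrib)
      qed
      finally have "lam * inner (p - y) u \<le> inner (p - y) (x - p)" by simp
      moreover have "- (norm (p - y) * norm u) \<le> inner (p - y) u"
        using Cauchy_Schwarz_ineq2[of "p - y" u] by linarith
      moreover have "norm (p - y) \<le> e + norm (x - y)"
        using norm_triangle_ineq[of "p - x" "x - y"] by (simp add: e_def norm_minus_commute)
      ultimately have "- ((e + norm (x - y)) * norm u) \<le> inner (p - y) u"
        using mult_right_mono[OF \<open>norm (p - y) \<le> e + norm (x - y)\<close> norm_ge_zero[of u]] by linarith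
      hence "lam * (- ((e + norm (x - y)) * norm u)) \<le> lam * inner (p - y) u"
        using lam0 by (intro mult_left_mono) auto
      hence "- lam * ((e + norm (x - y)) * norm u) \<le> lam * inner (p - y) u" by simp
      thus ?thesis using \<open>lam * inner (p - y) u \<le> inner (p - y) (x - p)\<close> by linarith
    qed
    have sum: "(1 - th) * inner (p - y1) (x - p) + th * inner (p - y2) (x - p) = - (e^2)"
    proof -
      have "(1 - th) * inner (p - y1) (x - p) + th * inner (p - y2) (x - p)
          = inner ((1 - th) *\<^sub>R (p - y1) + th *\<^sub>R (p - y2)) (x - p)"
        by (simp add: inner_add_left)
      also have "(1 - th) *\<^sub>R (p - y1) + th *\<^sub>R (p - y2) = p - x"
        by (simp add: x_def algebra_simps)
      also have "inner (p - x) (x - p) = - (e^2)"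
        by (simp add: e_def power2_norm_eq_inner flip: inner_minus_left)
      finally show ?thesis .
    qed
    have "e^2 \<le> (1 - th) * (lam * ((e + norm (x - y1)) * norm u1)) + th * (lam * ((e + norm (x - y2)) * norm u2))"
    proof -
      have "(1 - th) * (- lam * ((e + norm (x - y1)) * norm u1)) \<le> (1 - th) * inner (p - y1) (x - p)"
        using bnd[OF u1] th by (intro mult_left_mono) auto
      moreover have "th * (- lam * ((e + norm (x - y2)) * norm u2)) \<le> th * inner (p - y2) (x - p)"
        using bnd[OF u2] th by (intro mult_left_mono) auto
      ultimately show ?thesis using sum by simp
    qed
    also have "\<dots> \<le> lam * (e + M) * K"
    proof -
      have "(e + norm (x - y1)) * norm u1 \<le> (e + M) * norm u1"
        by (intro mult_right_mono) (auto simp: M_def)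
      moreover have "(e + norm (x - y2)) * norm u2 \<le> (e + M) * norm u2"
        by (intro mult_right_mono) (auto simp: M_def)
      ultimately have "(1 - th) * ((e + norm (x - y1)) * norm u1) + th * ((e + norm (x - y2)) * norm u2)
          \<le> (1 - th) * ((e + M) * K) + th * ((e + M) * K)"
        using th K0 M0 unfolding K_def
        by (intro add_mono mult_left_mono) (auto simp: algebra_simps e_def intro: order_trans mult_left_mono)
      hence "lam * ((1 - th) * ((e + norm (x - y1)) * norm u1) + th * ((e + norm (x - y2)) * norm u2))
          \<le> lam * ((e + M) * K)"
        unfolding comb1 using lam0 by (intro mult_left_mono) auto
      thus ?thesis by (simp add: algebra_simps)
    qed
    finally have "e < eps"
      by (intro arith_small[OF eps K0 M0 _ lam_def]) (auto simp: e_def)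
    moreover have "p \<in> op_dom A" using pa(1) by (auto simp: op_dom_def)
    ultimately show "\<exists>y\<in>op_dom A. dist y x < eps" by (auto simp: e_def dist_norm norm_minus_commute)
  qed
qed


lemma min_norm_exists:
  fixes S :: "'a::{real_inner,complete_space} set"
  assumes cl: "closed S" and cv: "convex S" and ne: "S \<noteq> {}"
  shows "\<exists>p\<in>S. \<forall>s\<in>S. norm p \<le> norm s"
proof -
  define d where "d = Inf ((\<lambda>s. (norm s)^2) ` S)"
  have bdd: "bdd_below ((\<lambda>s. (norm s)^2) ` S)" by (rule bdd_belowI2[where m=0]) simp
  have dle: "d \<le> (norm s)^2" if "s \<in> S" for s unfolding d_def by (rule cINF_lower[OF bdd that])
  have "\<forall>n::nat. \<exists>s\<in>S. (norm s)^2 < d + 1/Suc n"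
  proof
    fix n :: nat
    have "d < d + 1/Suc n" by simp
    thus "\<exists>s\<in>S. (norm s)^2 < d + 1/Suc n"
      unfolding d_def using cInf_lessD[of "(\<lambda>s. (norm s)^2) ` S"] ne by (auto simp: d_def)
  qed
  then obtain xs where xs: "\<And>n. xs n \<in> S" "\<And>n. (norm (xs n))^2 < d + 1/Suc n" by metis
  have mid: "(norm (a - b))^2 \<le> 2 * (norm a)^2 + 2 * (norm b)^2 - 4 * d" if "a \<in> S" "b \<in> S" for a b
  proof -
    have h: "\<forall>u. 0 \<le> u \<and> u \<le> 1 \<longrightarrow> (1 - u) *\<^sub>R a + u *\<^sub>R b \<in> S" using cv that unfolding convex_alt by blast
    have "(1 - 1/2) *\<^sub>R a + (1/2) *\<^sub>R b \<in> S" using h[rule_format, of "1/2"] by simp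
    moreover have "(1 - 1/2) *\<^sub>R a + (1/2) *\<^sub>R b = (1/2) *\<^sub>R (a + b)" by (simp add: scaleR_add_right)
    ultimately have "d \<le> (norm ((1/2) *\<^sub>R (a + b)))^2" using dle by metis
    thus ?thesis unfolding norm_mid_sq by simp
  qed
  have cb: "(norm (xs n - xs k))^2 \<le> 4 / Suc N" if "N \<le> n" "N \<le> k" for n k N
  proof -
    have "(norm (xs n - xs k))^2 \<le> 2 * (norm (xs n))^2 + 2 * (norm (xs k))^2 - 4 * d" by (rule mid[OF xs(1) xs(1)])
    also have "\<dots> \<le> 2 * (1/Suc n) + 2 * (1/Suc k)" using xs(2)[of n] xs(2)[of k] by simp
    also have "\<dots> \<le> 2 * (1/Suc N) + 2 * (1/Suc N)"
      using that by (intro add_mono mult_left_mono) (auto simp: frac_le)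
    finally show ?thesis by simp
  qed
  have C: "Cauchy xs"
  proof (rule metric_CauchyI)
    fix e :: real assume e: "e > 0"
    obtain N :: nat where N: "4 / e^2 < N" using reals_Archimedean2 by blast
    have "4 / Suc N < e^2"
    proof -
      have "4 < e^2 * N" using N e by (simp add: field_simps)
      hence "4 < e^2 * Suc N" using e by (smt (verit) mult_left_mono of_nat_Suc zero_le_power2)
      thus ?thesis using e by (simp add: field_simps)
    qed
    show "\<exists>M. \<forall>m\<ge>M. \<forall>n\<ge>M. dist (xs m) (xs n) < e"
    proof (intro exI allI impI)
      fix a b assume "N \<le> a" "N \<le> b"
      hence "(norm (xs a - xs b))^2 < e^2" using cb \<open>4 / Suc N < e^2\<close> by (meson le_less_trans)
      thus "dist (xs a) (xs b) < e" using e by (simp add: dist_norm power2_less_imp_less)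
    qed
  qed
  obtain p where p: "xs \<longlonglongrightarrow> p" using C convergent_eq_Cauchy by blast
  have pS: "p \<in> S" using cl p xs(1) closed_sequentially by blast
  have "(norm p)^2 - 0 \<le> d"
  proof (rule LIMSEQ_le_const2)
    have l3: "(\<lambda>n. 1 / real (Suc n)) \<longlonglongrightarrow> 0"
      using LIMSEQ_inverse_real_of_nat by (simp add: inverse_eq_divide)
    show "(\<lambda>n. (norm (xs n))^2 - 1 / real (Suc n)) \<longlonglongrightarrow> (norm p)^2 - 0"
      by (intro tendsto_intros p l3)
    show "\<exists>N. \<forall>n\<ge>N. (norm (xs n))^2 - 1 / real (Suc n) \<le> d" using xs(2) by (auto simp: less_imp_le algebra_simps)
  qed
  hence "\<forall>s\<in>S. norm p \<le> norm s"
  proof (intro ballI)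
    fix s assume "(norm p)^2 - 0 \<le> d" "s \<in> S"
    hence "(norm p)^2 \<le> (norm s)^2" using dle[of s] by linarith
    thus "norm p \<le> norm s" by (rule power2_le_imp_le) simp
  qed
  thus ?thesis using pS by blast
qed

lemma proj_props:
  fixes S :: "'a::{real_inner,complete_space} set"
  assumes cl: "closed S" and cv: "convex S" and ne: "S \<noteq> {}"
  shows "proj S 0 \<in> S \<and> (\<forall>s\<in>S. norm (proj S 0) \<le> norm s) \<and> (\<forall>s\<in>S. 0 \<le> inner (s - proj S 0) (proj S 0))"
proof -
  have ex: "\<exists>y. y \<in> S \<and> (\<forall>z\<in>S. dist 0 y \<le> dist 0 z)" using min_norm_exists[OF assms] by auto
  define p where "p = proj S 0"
  have p: "p \<in> S \<and> (\<forall>z\<in>S. dist 0 p \<le> dist 0 z)"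
    unfolding p_def proj_def by (rule someI_ex[OF ex])
  hence pS: "p \<in> S" and pm: "\<forall>s\<in>S. norm p \<le> norm s" by auto
  have "0 \<le> inner (s - p) p" if sS: "s \<in> S" for s
  proof -
    have "0 \<le> 2 * inner p (s - p)"
    proof (rule small_t_nonneg[of "(norm (s - p))^2"])
      show "0 \<le> (norm (s - p))^2" by simp
      fix t :: real assume t: "0 < t" "t \<le> 1"
      have "(1 - t) *\<^sub>R p + t *\<^sub>R s \<in> S" using cv pS sS t unfolding convex_alt by auto
      moreover have "(1 - t) *\<^sub>R p + t *\<^sub>R s = p + t *\<^sub>R (s - p)" by (simp add: algebra_simps)
      ultimately have "norm p \<le> norm (p + t *\<^sub>R (s - p))" using pm by metis
      hence "(norm p)^2 \<le> (norm (p + t *\<^sub>R (s - p)))^2" by (simp add: power_mono)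
      hence "0 \<le> 2 * t * inner p (s - p) + t^2 * (norm (s - p))^2" unfolding norm_comb_sq by simp
      hence "0 \<le> t * (2 * inner p (s - p) + t * (norm (s - p))^2)" by (simp add: algebra_simps power2_eq_square)
      thus "0 \<le> 2 * inner p (s - p) + t * (norm (s - p))^2" using t by (simp add: zero_le_mult_iff)
    qed
    thus ?thesis by (simp add: inner_commute)
  qed
  thus ?thesis using pS pm by (simp add: p_def)
qed

lemma proj_unique:
  assumes "u \<in> S" "\<forall>w\<in>S. norm u \<le> norm w" "\<forall>w\<in>S. norm w \<le> norm u \<longrightarrow> w = u"
  shows "proj S 0 = u"
proof -
  have ex: "\<exists>y. y \<in> S \<and> (\<forall>z\<in>S. dist 0 y \<le> dist 0 z)" using assms by auto
  have "proj S 0 \<in> S \<and> (\<forall>z\<in>S. dist 0 (proj S 0) \<le> dist 0 z)"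
    unfolding proj_def by (rule someI_ex[OF ex])
  thus ?thesis using assms by auto
qed

lemma normmin:
  fixes u w :: "'a::real_inner"
  assumes "(norm u)^2 \<le> inner w u"
  shows "norm u \<le> norm w" "norm w \<le> norm u \<Longrightarrow> w = u"
proof -
  have e: "(norm (w - u))^2 = (norm w)^2 - 2 * inner w u + (norm u)^2"
    unfolding power2_norm_eq_inner by (simp add: inner_diff_left inner_diff_right inner_commute)
  hence le: "(norm (w - u))^2 \<le> (norm w)^2 - (norm u)^2" using assms by linarith
  hence "(norm u)^2 \<le> (norm w)^2" using zero_le_power2[of "norm (w - u)"] by linarith
  thus "norm u \<le> norm w" by (auto intro: power2_le_imp_le)
  assume "norm w \<le> norm u"
  hence "(norm w)^2 \<le> (norm u)^2" by (simp add: power_mono)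
  hence "(norm (w - u))^2 \<le> 0" using le by linarith
  thus "w = u" by simp
qed


lemma closure_diff_mem:
  fixes S T :: "'a::real_normed_vector set"
  assumes x: "x \<in> closure S" and y: "y \<in> closure T"
  shows "x - y \<in> closure {a - b |a b. a \<in> S \<and> b \<in> T}"
  unfolding closure_approachable
proof (intro allI impI)
  fix e :: real assume e: "e > 0"
  obtain a where a: "a \<in> S" "dist a x < e/2" using x e unfolding closure_approachable by (meson half_gt_zero)
  obtain b where b: "b \<in> T" "dist b y < e/2" using y e unfolding closure_approachable by (meson half_gt_zero)
  have "dist (a - b) (x - y) \<le> dist a x + dist b y"
  proof -
    have "dist (a - b) (x - y) = norm ((a - x) - (b - y))"
      unfolding dist_norm by (rule arg_cong[where f=norm]) (simp add: algebra_simps)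
    also have "\<dots> \<le> norm (a - x) + norm (b - y)" by (rule norm_triangle_ineq4)
    finally show ?thesis by (simp add: dist_norm)
  qed
  hence "dist (a - b) (x - y) < e" using a b by linarith
  moreover have "a - b \<in> {a - b |a b. a \<in> S \<and> b \<in> T}" using a b by blast
  ultimately show "\<exists>z\<in>{a - b |a b. a \<in> S \<and> b \<in> T}. dist z (x - y) < e" by blast
qed

lemma closure_add_mem:
  fixes S T :: "'a::real_normed_vector set"
  assumes x: "x \<in> closure S" and y: "y \<in> closure T"
  shows "x + y \<in> closure {a + b |a b. a \<in> S \<and> b \<in> T}"
  unfolding closure_approachable
proof (intro allI impI)
  fix e :: real assume e: "e > 0"
  obtain a where a: "a \<in> S" "dist a x < e/2" using x e unfolding closure_approachable by (meson half_gt_zero)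
  obtain b where b: "b \<in> T" "dist b y < e/2" using y e unfolding closure_approachable by (meson half_gt_zero)
  have "dist (a + b) (x + y) \<le> dist a x + dist b y"
  proof -
    have "dist (a + b) (x + y) = norm ((a - x) + (b - y))"
      unfolding dist_norm by (rule arg_cong[where f=norm]) (simp add: algebra_simps)
    also have "\<dots> \<le> norm (a - x) + norm (b - y)" by (rule norm_triangle_ineq)
    finally show ?thesis by (simp add: dist_norm)
  qed
  hence "dist (a + b) (x + y) < e" using a b by linarith
  moreover have "a + b \<in> {a + b |a b. a \<in> S \<and> b \<in> T}" using a b by blast
  ultimately show "\<exists>z\<in>{a + b |a b. a \<in> S \<and> b \<in> T}. dist z (x + y) < e" by blast
qed

lemma comb_closure:
  assumes "convex (closure S)" "a1 \<in> S" "a2 \<in> S" "0 \<le> t" "t \<le> 1"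
  shows "(1 - t) *\<^sub>R a1 + t *\<^sub>R a2 \<in> closure S"
  using assms closure_subset unfolding convex_alt by blast

lemma convex_closure_diffset:
  fixes S T :: "'a::real_normed_vector set"
  assumes cS: "convex (closure S)" and cT: "convex (closure T)"
  shows "convex (closure {a - b |a b. a \<in> S \<and> b \<in> T})"
proof (rule convex_closure_twopoint)
  fix y1 y2 and t :: real assume y1: "y1 \<in> {a - b |a b. a \<in> S \<and> b \<in> T}" and y2: "y2 \<in> {a - b |a b. a \<in> S \<and> b \<in> T}"
    and t: "0 \<le> t" "t \<le> 1"
  obtain a1 b1 where 1: "y1 = a1 - b1" "a1 \<in> S" "b1 \<in> T" using y1 by blast
  obtain a2 b2 where 2: "y2 = a2 - b2" "a2 \<in> S" "b2 \<in> T" using y2 by blast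
  have "(1 - t) *\<^sub>R y1 + t *\<^sub>R y2 = ((1 - t) *\<^sub>R a1 + t *\<^sub>R a2) - ((1 - t) *\<^sub>R b1 + t *\<^sub>R b2)"
    unfolding 1 2 by (simp add: algebra_simps)
  thus "(1 - t) *\<^sub>R y1 + t *\<^sub>R y2 \<in> closure {a - b |a b. a \<in> S \<and> b \<in> T}"
    using closure_diff_mem[OF comb_closure[OF cS 1(2) 2(2) t] comb_closure[OF cT 1(3) 2(3) t]] by simp
qed

lemma convex_closure_sumset:
  fixes S T :: "'a::real_normed_vector set"
  assumes cS: "convex (closure S)" and cT: "convex (closure T)"
  shows "convex (closure {a + b |a b. a \<in> S \<and> b \<in> T})"
proof (rule convex_closure_twopoint)
  fix y1 y2 and t :: real assume y1: "y1 \<in> {a + b |a b. a \<in> S \<and> b \<in> T}" and y2: "y2 \<in> {a + b |a b. a \<in> S \<and> b \<in> T}"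
    and t: "0 \<le> t" "t \<le> 1"
  obtain a1 b1 where 1: "y1 = a1 + b1" "a1 \<in> S" "b1 \<in> T" using y1 by blast
  obtain a2 b2 where 2: "y2 = a2 + b2" "a2 \<in> S" "b2 \<in> T" using y2 by blast
  have "(1 - t) *\<^sub>R y1 + t *\<^sub>R y2 = ((1 - t) *\<^sub>R a1 + t *\<^sub>R a2) + ((1 - t) *\<^sub>R b1 + t *\<^sub>R b2)"
    unfolding 1 2 by (simp add: algebra_simps)
  thus "(1 - t) *\<^sub>R y1 + t *\<^sub>R y2 \<in> closure {a + b |a b. a \<in> S \<and> b \<in> T}"
    using closure_add_mem[OF comb_closure[OF cS 1(2) 2(2) t] comb_closure[OF cT 1(3) 2(3) t]] by simp
qed

lemma convex_closure_ran:
  fixes A :: "'a::{real_inner,complete_space} \<Rightarrow> 'a set"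
  assumes m: "maximal_monotone A"
  shows "convex (closure (op_ran A))"
proof -
  have "op_dom (\<lambda>u. {x. u \<in> A x}) = op_ran A" by (auto simp: op_dom_def op_ran_def)
  thus ?thesis using convex_closure_dom[OF maxmono_inverse[OF m]] by simp
qed

lemma recession:
  fixes B :: "'a::{real_inner,complete_space} \<Rightarrow> 'a set"
  assumes m: "maximal_monotone B" and b0: "b0 \<in> B y0"
    and bd: "\<And>y. y \<in> op_dom B \<Longrightarrow> inner y w \<le> c" and s: "s > 0"
  shows "b0 + s *\<^sub>R w \<in> closure (op_ran B)"
proof -
  have cv: "convex (closure (op_ran B))" by (rule convex_closure_ran[OF m])
  have b0r: "b0 \<in> op_ran B" using b0 by (auto simp: op_ran_def)
  have y0d: "y0 \<in> op_dom B" using b0 by (auto simp: op_dom_def)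
  define del where "del = c - inner y0 w"
  have del0: "del \<ge> 0" using bd[OF y0d] by (simp add: del_def)
  have "b0 + s *\<^sub>R w \<in> closure (closure (op_ran B))"
    unfolding closure_approachable
  proof (intro allI impI)
    fix e :: real assume e: "e > 0"
    define t where "t = s + s^2 * del / e^2 + 1"
    have "s^2 * del / e^2 \<ge> 0" using del0 by simp
    hence ts: "t > s" by (simp add: t_def)
    hence t0: "t > 0" using s by simp
    obtain p a where pa: "a \<in> B p" "1 *\<^sub>R a = (y0 + b0 + t *\<^sub>R w) - p" using minty[OF m zero_less_one, of "y0 + b0 + t *\<^sub>R w"] by blast
    have a: "a = y0 - p + t *\<^sub>R w + b0" using pa(2) by (simp add: algebra_simps)
    have pd: "p \<in> op_dom B" using pa(1) by (auto simp: op_dom_def)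
    define ee where "ee = norm (y0 - p)"
    have "0 \<le> inner (p - y0) (a - b0)" by (rule maxmono_mono[OF m pa(1) b0])
    also have "inner (p - y0) (a - b0) = - (ee^2) + t * (inner p w - inner y0 w)"
    proof -
      have "a - b0 = - (p - y0) + t *\<^sub>R w" unfolding a by (simp add: algebra_simps)
      hence "inner (p - y0) (a - b0) = inner (p - y0) (- (p - y0)) + t * inner (p - y0) w"
        by (simp only: inner_add_right inner_scaleR_right)
      hence "inner (p - y0) (a - b0) = - inner (p - y0) (p - y0) + t * inner (p - y0) w"
        by (simp only: inner_minus_right)
      moreover have "inner (p - y0) (p - y0) = ee^2"
        by (simp add: ee_def power2_norm_eq_inner norm_minus_commute flip: norm_minus_commute)
      ultimately show ?thesis by (simp add: inner_diff_left)
    qed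
    finally have "ee^2 \<le> t * (inner p w - inner y0 w)" by simp
    also have "\<dots> \<le> t * del" using bd[OF pd] t0 unfolding del_def by (intro mult_left_mono) auto
    finally have eet: "ee^2 \<le> t * del" .
    have ar: "a \<in> op_ran B" using pa(1) by (auto simp: op_ran_def)
    define r where "r = (1 - s/t) *\<^sub>R b0 + (s/t) *\<^sub>R a"
    have rin: "r \<in> closure (op_ran B)" unfolding r_def
      using comb_closure[OF cv b0r ar, of "s/t"] s t0 ts by simp
    have r: "r = b0 + s *\<^sub>R w + (s/t) *\<^sub>R (y0 - p)"
      unfolding r_def a using t0 by (simp add: algebra_simps)
    have "dist r (b0 + s *\<^sub>R w) = (s/t) * ee"
      unfolding r using s t0 by (simp add: dist_norm ee_def)
    also have "\<dots> < e"
    proof -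
      have "s * ee < t * e"
      proof -
        have "(s * ee)^2 = s^2 * ee^2" by (simp add: power_mult_distrib)
        also have "\<dots> \<le> s^2 * (t * del)" using eet by (simp add: mult_left_mono)
        also have "\<dots> < t * (t * e^2)"
        proof -
          have "s^2 * del < t * e^2"
          proof -
            have "t * e^2 = s * e^2 + s^2 * del + e^2" using e by (simp add: t_def field_simps)
            thus ?thesis using s e by (smt (verit) mult_pos_pos zero_less_power)
          qed
          hence "t * (s^2 * del) < t * (t * e^2)" using t0 by simp
          thus ?thesis by (simp add: algebra_simps)
        qed
        also have "\<dots> = (t * e)^2" by (simp add: power2_eq_square algebra_simps)
        finally have "(s * ee)^2 < (t * e)^2" .
        thus ?thesis using t0 e by (simp add: power2_less_imp_less)
      qed
      thus ?thesis using t0 by (simp add: field_simps)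
    qed
    finally show "\<exists>y\<in>closure (op_ran B). dist y (b0 + s *\<^sub>R w) < e" using rin by blast
  qed
  thus ?thesis by simp
qed


theorem theorem4p3:
  fixes A B :: "'a::{real_inner, complete_space} \<Rightarrow> 'a set"
    and T :: "'a \<Rightarrow> 'a" and v vD vR :: 'a and D R Z Zt :: "'a set"
  assumes mA: "maximal_monotone A" and mB: "maximal_monotone B"
    and T_def: "T = DR_op A B"
    and v_def: "v = proj (closure (range (\<lambda>x. x - T x))) 0"
    and D_def: "D = {a - b | a b. a \<in> op_dom A \<and> b \<in> op_dom B}"
    and R_def: "R = {a + b | a b. a \<in> op_ran A \<and> b \<in> op_ran B}"
    and vD_def: "vD = proj (closure D) 0"
    and vR_def: "vR = proj (closure R) 0"
    and h1: "closure (range (\<lambda>x. x - T x)) = closure (D \<inter> R)"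
    and h2: "closure (D \<inter> R) = closure D \<inter> closure R"
    and Z_def: "Z = {x. \<exists>a\<in>A x. \<exists>b\<in>B (x - v). 0 = - v + a + b}"
    and Zt_def: "Zt = {x. \<exists>a\<in>A x. \<exists>b\<in>B (x - vD). 0 = - vR + a + b}"
  shows "Zt \<subseteq> Z \<and> (vR = 0 \<longrightarrow> Zt = Z)"
proof -
  have vS: "v = proj (closure (D \<inter> R)) 0" using v_def h1 by simp
  have cvD: "convex (closure D)" unfolding D_def
    by (rule convex_closure_diffset[OF convex_closure_dom[OF mA] convex_closure_dom[OF mB]])
  have cvR: "convex (closure R)" unfolding R_def
    by (rule convex_closure_sumset[OF convex_closure_ran[OF mA] convex_closure_ran[OF mB]])
  have inD: "x - y \<in> D" if "a \<in> A x" "b \<in> B y" for x y a b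
    using that unfolding D_def op_dom_def by blast
  have inR: "a + b \<in> R" if "a \<in> A x" "b \<in> B y" for x y a b
    using that unfolding R_def op_ran_def by blast
  have PD: "vD \<in> closure D \<and> (\<forall>s\<in>closure D. norm vD \<le> norm s) \<and> (\<forall>s\<in>closure D. 0 \<le> inner (s - vD) vD)"
    if "D \<noteq> {}" unfolding vD_def by (rule proj_props) (use cvD that in auto)
  have PR: "vR \<in> closure R \<and> (\<forall>s\<in>closure R. norm vR \<le> norm s) \<and> (\<forall>s\<in>closure R. 0 \<le> inner (s - vR) vR)"
    if "R \<noteq> {}" unfolding vR_def by (rule proj_props) (use cvR that in auto)
  have part1: "Zt \<subseteq> Z"
  proof
    fix x assume "x \<in> Zt"
    then obtain a b where ab: "a \<in> A x" "b \<in> B (x - vD)" "0 = - vR + a + b" by (auto simp: Zt_def)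
    have vDD: "vD \<in> D" using inD[OF ab(1,2)] by simp
    have vRR: "vR \<in> R" using inR[OF ab(1,2)] ab(3) by (simp add: algebra_simps)
    have F1: "\<And>s. s \<in> closure D \<Longrightarrow> 0 \<le> inner (s - vD) vD" using PD vDD by blast
    have F2: "\<And>s. s \<in> closure R \<Longrightarrow> 0 \<le> inner (s - vR) vR" using PR vRR by blast
    have abv: "a + b = vR" using ab(3) by (simp add: algebra_simps)
    have C1: "0 \<le> inner (y - x) vD" if "w \<in> A y" for y w
    proof -
      have "y - (x - vD) \<in> D" by (rule inD[OF that ab(2)])
      hence "0 \<le> inner (y - (x - vD) - vD) vD" using F1 closure_subset by blast
      thus ?thesis by (simp add: algebra_simps)
    qed
    have C2: "0 \<le> inner (x - vD - y) vD" if "w \<in> B y" for y w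
    proof -
      have "x - y \<in> D" by (rule inD[OF ab(1) that])
      hence "0 \<le> inner (x - y - vD) vD" using F1 closure_subset by blast
      thus ?thesis by (simp add: algebra_simps)
    qed
    have C3: "0 \<le> inner (w - b) vR" if "w \<in> B y" for y w
    proof -
      have "a + w \<in> R" by (rule inR[OF ab(1) that])
      hence "0 \<le> inner (a + w - vR) vR" using F2 closure_subset by blast
      moreover have "a + w - vR = w - b" by (simp add: abv[symmetric])
      ultimately show ?thesis by simp
    qed
    have C4: "0 \<le> inner (w - a) vR" if "w \<in> A y" for y w
    proof -
      have "w + b \<in> R" by (rule inR[OF that ab(2)])
      hence "0 \<le> inner (w + b - vR) vR" using F2 closure_subset by blast
      moreover have "w + b - vR = w - a" by (simp add: abv[symmetric])
      ultimately show ?thesis by simp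
    qed
    have S1: "a - vD \<in> A x"
    proof (rule maxmono_rel[OF mA])
      fix y w assume w: "w \<in> A y"
      have "0 \<le> inner (x - y) (a - w)" by (rule maxmono_mono[OF mA ab(1) w])
      moreover have "inner (x - y) (a - vD - w) = inner (x - y) (a - w) + inner (y - x) vD"
        unfolding inner_diff_left inner_diff_right by linarith
      ultimately show "0 \<le> inner (x - y) (a - vD - w)" using C1[OF w] by linarith
    qed
    have S2: "b \<in> B (x - vD - vR)"
    proof (rule maxmono_rel[OF mB])
      fix y w assume w: "w \<in> B y"
      have "0 \<le> inner (x - vD - y) (b - w)" by (rule maxmono_mono[OF mB ab(2) w])
      moreover have "inner (x - vD - vR - y) (b - w) = inner (x - vD - y) (b - w) + inner (w - b) vR"
        unfolding inner_diff_left inner_diff_right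
        using inner_commute[of vR b] inner_commute[of vR w] by linarith
      ultimately show "0 \<le> inner (x - vD - vR - y) (b - w)" using C3[OF w] by linarith
    qed
    have o1: "0 \<le> inner vR vD"
    proof -
      have "x - (x - vD - vR) \<in> D" by (rule inD[OF ab(1) S2])
      hence "0 \<le> inner (x - (x - vD - vR) - vD) vD" using F1 closure_subset by blast
      thus ?thesis by simp
    qed
    have o2: "inner vR vD \<le> 0"
    proof -
      have "0 \<le> inner ((a - vD) - a) vR" by (rule C4[OF S1])
      thus ?thesis using inner_commute[of vD vR] by simp
    qed
    have orth: "inner vR vD = 0" using o1 o2 by simp
    have S3: "b + vD \<in> B (x - vD - vR)"
    proof (rule maxmono_rel[OF mB])
      fix y w assume w: "w \<in> B y"
      have "0 \<le> inner (x - vD - y) (b - w)" by (rule maxmono_mono[OF mB ab(2) w])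
      moreover have "inner (x - vD - vR - y) (b + vD - w) = inner (x - vD - y) (b - w)
          + inner (x - vD - y) vD + inner (w - b) vR - inner vR vD"
        unfolding inner_diff_left inner_diff_right inner_add_left inner_add_right
        using inner_commute[of vR b] inner_commute[of vR w] by linarith
      ultimately show "0 \<le> inner (x - vD - vR - y) (b + vD - w)" using C2[OF w] C3[OF w] orth by linarith
    qed
    define u where "u = vD + vR"
    have uD: "u \<in> D" using inD[OF ab(1) S2] by (simp add: u_def add.commute)
    have "a + (b + vD) = u" unfolding u_def using abv by (metis add.assoc add.commute)
    hence uR: "u \<in> R" using inR[OF ab(1) S3] by simp
    have umin: "(norm u)^2 \<le> inner w u" if "w \<in> closure D \<inter> closure R" for w
    proof -
      have "0 \<le> inner (w - vD) vD" using F1 that by blast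
      moreover have "0 \<le> inner (w - vR) vR" using F2 that by blast
      moreover have "(norm u)^2 = inner vD vD + inner vR vR"
        unfolding u_def power2_norm_eq_inner inner_add_left inner_add_right
        using orth inner_commute[of vD vR] by linarith
      ultimately show ?thesis unfolding u_def inner_add_right inner_diff_left by linarith
    qed
    have sub: "closure (D \<inter> R) \<subseteq> closure D \<inter> closure R" by (simp add: closure_mono)
    have "v = u" unfolding vS
    proof (rule proj_unique)
      show "u \<in> closure (D \<inter> R)" using uD uR closure_subset by blast
      show "\<forall>w\<in>closure (D \<inter> R). norm u \<le> norm w" using umin sub normmin(1) by blast
      show "\<forall>w\<in>closure (D \<inter> R). norm w \<le> norm u \<longrightarrow> w = u" using umin sub normmin(2) by blast
    qed
    hence "b + vD \<in> B (x - v)" using S3 by (simp add: u_def algebra_simps)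
    moreover have "0 = - v + a + (b + vD)" using \<open>v = u\<close> abv by (simp add: u_def algebra_simps)
    ultimately show "x \<in> Z" using ab(1) by (auto simp: Z_def)
  qed
  have part2: "Z \<subseteq> Zt" if vR0: "vR = 0"
  proof
    fix x assume "x \<in> Z"
    then obtain a b where ab: "a \<in> A x" "b \<in> B (x - v)" "0 = - v + a + b" by (auto simp: Z_def)
    have abv: "a + b = v" using ab(3) by (simp add: algebra_simps)
    have vDD: "v \<in> D" using inD[OF ab(1,2)] by simp
    have vRR: "v \<in> R" using inR[OF ab(1,2)] abv by simp
    have F1: "\<And>s. s \<in> closure D \<Longrightarrow> 0 \<le> inner (s - vD) vD" using PD vDD by blast
    have vDc: "vD \<in> closure D" and vDm: "\<And>s. s \<in> closure D \<Longrightarrow> norm vD \<le> norm s" using PD vDD by blast+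
    have zR: "0 \<in> closure R" using PR vRR vR0 by auto
    have bdB: "inner y vD \<le> inner x vD - inner vD vD" if yd: "y \<in> op_dom B" for y
    proof -
      obtain w where "w \<in> B y" using yd by (auto simp: op_dom_def)
      hence "x - y \<in> D" by (rule inD[OF ab(1)])
      hence "0 \<le> inner (x - y - vD) vD" using F1 closure_subset by blast
      thus ?thesis by (simp add: inner_diff_left)
    qed
    have shift: "w + vD \<in> closure (op_ran B)" if "w \<in> B y" for y w
      using recession[OF mB that bdB, of 1] by simp
    have vDR: "vD \<in> closure R"
      unfolding closure_approachable
    proof (intro allI impI)
      fix e :: real assume e: "e > 0"
      obtain r where r: "r \<in> R" "dist r 0 < e/2" using zR e unfolding closure_approachable by (meson half_gt_zero)
      obtain a1 b1 y1 y2 where r1: "r = a1 + b1" "a1 \<in> A y1" "b1 \<in> B y2"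
        using r(1) unfolding R_def op_ran_def by blast
      obtain b3 where b3: "b3 \<in> op_ran B" "dist b3 (b1 + vD) < e/2"
        using shift[OF r1(3)] e unfolding closure_approachable by (meson half_gt_zero)
      obtain y3 where y3: "b3 \<in> B y3" using b3(1) by (auto simp: op_ran_def)
      have "a1 + b3 \<in> R" by (rule inR[OF r1(2) y3])
      moreover have "dist (a1 + b3) vD < e"
      proof -
        have "dist (a1 + b3) vD = norm (r + (b3 - (b1 + vD)))"
          unfolding dist_norm r1(1) by (rule arg_cong[where f=norm]) (simp add: algebra_simps)
        also have "\<dots> \<le> norm r + norm (b3 - (b1 + vD))" by (rule norm_triangle_ineq)
        also have "\<dots> < e" using r(2) b3(2) by (simp add: dist_norm)
        finally show ?thesis .
      qed
      ultimately show "\<exists>y\<in>R. dist y vD < e" by blast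
    qed
    have vDS: "vD \<in> closure (D \<inter> R)" using h2 vDc vDR by simp
    have ex: "\<exists>y. y \<in> closure (D \<inter> R) \<and> (\<forall>z\<in>closure (D \<inter> R). dist 0 y \<le> dist 0 z)"
      using vDS vDm h2 by (intro exI[of _ vD]) auto
    have vP: "v \<in> closure (D \<inter> R) \<and> (\<forall>z\<in>closure (D \<inter> R). dist 0 v \<le> dist 0 z)"
      unfolding vS proj_def by (rule someI_ex[OF ex])
    have "norm v \<le> norm vD" using vP vDS by auto
    moreover have "(norm vD)^2 \<le> inner v vD"
    proof -
      have "v \<in> closure D" using vP h2 by auto
      hence "0 \<le> inner (v - vD) vD" by (rule F1)
      thus ?thesis by (simp add: inner_diff_left power2_norm_eq_inner)
    qed
    ultimately have vvD: "v = vD" using normmin(2) by blast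
    have bb: "b \<in> B (x - vD)" using ab(2) vvD by simp
    have S1: "a - vD \<in> A x"
    proof (rule maxmono_rel[OF mA])
      fix y w assume w: "w \<in> A y"
      have "y - (x - vD) \<in> D" by (rule inD[OF w bb])
      hence "0 \<le> inner (y - (x - vD) - vD) vD" using F1 closure_subset by blast
      hence c1: "0 \<le> inner (y - x) vD" by (simp add: algebra_simps)
      have "0 \<le> inner (x - y) (a - w)" by (rule maxmono_mono[OF mA ab(1) w])
      moreover have "inner (x - y) (a - vD - w) = inner (x - y) (a - w) + inner (y - x) vD"
        unfolding inner_diff_left inner_diff_right by linarith
      ultimately show "0 \<le> inner (x - y) (a - vD - w)" using c1 by linarith
    qed
    have "0 = - vR + (a - vD) + b" using vR0 abv vvD by (simp add: algebra_simps)
    thus "x \<in> Zt" using S1 bb by (auto simp: Zt_def)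
  qed
  show ?thesis using part1 part2 by blast
qed

end
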